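(* Let $a>0$, $\phi\in\mathcal D_+[0,\infty)$, and let $C^\phi$ and the times $\sigma_k,\tau_k$ be as in the context. For every $k\ge1$ and every $t\in[\sigma_{k-1},\tau_k)$, $$C^\phi(t)=\sup_{s\in[\sigma_{k-1},t]}(\phi(s)-a)^+.$$
   Context: $\mathcal D_+[0,\infty)$ is the set of nonnegative right-continuous functions $[0,\infty)\to\mathbb R$ with left limits. $x^+=\max(x,0)$, $\wedge=\min$. For $a>0$, $C^\phi(t)=\sup_{s\in[0,t]}\big[(\phi(s)-a)^+\wedge\inf_{u\in[s,t]}\phi(u)\big]$. Times: $\tau_0=0$, $\sigma_0=\min\{t\ge0:\phi(t)-a\ge0\}$, and for $k\ge1$, $\tau_k=\min\{t\ge\sigma_{k-1}:\phi(t)\le\sup_{s\in[\sigma_{k-1},t]}\phi(s)-a\}$, $\sigma_k=\min\{t\ge\tau_k:\phi(t)-a\ge\inf_{u\in[\tau_k,t]}\phi(u)\}$, with $\min\emptyset=+\infty$ (minima are attained when finite, by right-continuity). *)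

theory Defs
  imports "HOL-Analysis.Analysis"
begin

text \<open>Nonnegative cadlag functions on [0,inf); represented as functions real => real whose
  values at negative arguments are irrelevant.\<close>
definition Dplus :: "(real \<Rightarrow> real) set" where
  "Dplus = {\<phi>. (\<forall>t\<ge>0. \<phi> t \<ge> 0) \<and> (\<forall>t\<ge>0. continuous (at_right t) \<phi>)
              \<and> (\<forall>t>0. \<exists>l. (\<phi> \<longlongrightarrow> l) (at_left t))}"

definition Cphi :: "real \<Rightarrow> (real \<Rightarrow> real) \<Rightarrow> real \<Rightarrow> real" where
  "Cphi a \<phi> t = (SUP s\<in>{0..t}. min (max (\<phi> s - a) 0) (INF u\<in>{s..t}. \<phi> u))"

definition first_time :: "ereal \<Rightarrow> (real \<Rightarrow> bool) \<Rightarrow> ereal" where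
  "first_time S P = (if \<exists>t. S \<le> ereal t \<and> P t
                      then ereal (Inf {t. S \<le> ereal t \<and> P t}) else \<infinity>)"

fun stimes :: "real \<Rightarrow> (real \<Rightarrow> real) \<Rightarrow> nat \<Rightarrow> ereal \<times> ereal" where
  "stimes a \<phi> 0 = (0, first_time 0 (\<lambda>t. \<phi> t - a \<ge> 0))"
| "stimes a \<phi> (Suc k) =
    (let \<sigma> = snd (stimes a \<phi> k);
         \<tau> = first_time \<sigma> (\<lambda>t. \<phi> t \<le> (SUP s\<in>{s. \<sigma> \<le> ereal s \<and> s \<le> t}. \<phi> s) - a)
     in (\<tau>, first_time \<tau> (\<lambda>t. \<phi> t - a \<ge> (INF u\<in>{u. \<tau> \<le> ereal u \<and> u \<le> t}. \<phi> u))))"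

definition tau_time :: "real \<Rightarrow> (real \<Rightarrow> real) \<Rightarrow> nat \<Rightarrow> ereal" where
  "tau_time a \<phi> k = fst (stimes a \<phi> k)"

definition sigma_time :: "real \<Rightarrow> (real \<Rightarrow> real) \<Rightarrow> nat \<Rightarrow> ereal" where
  "sigma_time a \<phi> k = snd (stimes a \<phi> k)"

end

theory Submission imports Defs begin

lemma rc:
  assumes "\<phi> \<in> Dplus" "0 \<le> x" "0 < e"
  shows "\<exists>b>x. \<forall>y>x. y < b \<longrightarrow> \<bar>\<phi> y - \<phi> x\<bar> < e"
proof -
  have "continuous (at_right x) \<phi>" using assms unfolding Dplus_def by auto
  hence "(\<phi> \<longlongrightarrow> \<phi> x) (at_right x)" by (simp add: continuous_within)
  hence "eventually (\<lambda>y. dist (\<phi> y) (\<phi> x) < e) (at_right x)"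
    using assms(3) tendstoD by blast
  thus ?thesis by (simp add: eventually_at_right_field dist_real_def)
qed

lemma lc:
  assumes "\<phi> \<in> Dplus" "0 < x"
  shows "\<exists>l. \<exists>b<x. \<forall>y>b. y < x \<longrightarrow> \<bar>\<phi> y - l\<bar> < 1"
proof -
  obtain l where "(\<phi> \<longlongrightarrow> l) (at_left x)" using assms unfolding Dplus_def by auto
  hence "eventually (\<lambda>y. dist (\<phi> y) l < 1) (at_left x)"
    using tendstoD by fastforce
  thus ?thesis by (auto simp add: eventually_at_left_field dist_real_def)
qed

lemma cadlag_bdd:
  assumes "\<phi> \<in> Dplus" "0 \<le> c"
  shows "bdd_above (\<phi> ` {c..d})"
proof -
  have loc: "\<exists>\<delta>>0. \<exists>M. \<forall>y\<in>{c..d}. dist y x < \<delta> \<longrightarrow> \<phi> y \<le> M" if x: "x \<in> {c..d}" for x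
  proof -
    obtain b where b: "b > x" "\<forall>y>x. y < b \<longrightarrow> \<bar>\<phi> y - \<phi> x\<bar> < 1"
      using rc[OF assms(1), of x 1] x assms(2) by auto
    show ?thesis
    proof (cases "x = c")
      case True
      show ?thesis
      proof (intro exI conjI)
        show "b - x > 0" using b by simp
        show "\<forall>y\<in>{c..d}. dist y x < b - x \<longrightarrow> \<phi> y \<le> \<phi> x + 1"
        proof (intro ballI impI)
          fix y assume "y \<in> {c..d}" "dist y x < b - x"
          thus "\<phi> y \<le> \<phi> x + 1" using b True
            by (cases "y = x") (auto simp: dist_real_def abs_if split: if_splits)
        qed
      qed
    next
      case False
      hence "x > 0" using x assms(2) by auto
      then obtain l b' where b': "b' < x" "\<forall>y>b'. y < x \<longrightarrow> \<bar>\<phi> y - l\<bar> < 1"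
        using lc[OF assms(1)] by blast
      show ?thesis
      proof (intro exI conjI)
        show "min (b - x) (x - b') > 0" using b b' by simp
        show "\<forall>y\<in>{c..d}. dist y x < min (b - x) (x - b') \<longrightarrow> \<phi> y \<le> max (\<phi> x + 1) (l + 1)"
        proof (intro ballI impI)
          fix y assume "y \<in> {c..d}" "dist y x < min (b - x) (x - b')"
          hence "b' < y" "y < b" by (auto simp: dist_real_def abs_if split: if_splits)
          thus "\<phi> y \<le> max (\<phi> x + 1) (l + 1)" using b b'
            by (cases "y = x"; cases "y < x") (auto, force+)
        qed
      qed
    qed
  qed
  then obtain \<delta> M where dm: "\<And>x. x \<in> {c..d} \<Longrightarrow> \<delta> x > 0 \<and> (\<forall>y\<in>{c..d}. dist y x < \<delta> x \<longrightarrow> \<phi> y \<le> M x)"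
    by metis
  have "{c..d} \<subseteq> (\<Union>x\<in>{c..d}. ball x (\<delta> x))" using dm by force
  then obtain D where D: "D \<subseteq> {c..d}" "finite D" "{c..d} \<subseteq> (\<Union>x\<in>D. ball x (\<delta> x))"
    using compactE_image[of "{c..d}" "{c..d}" "\<lambda>x. ball x (\<delta> x)"] by auto
  show ?thesis unfolding bdd_above_def
  proof (intro exI ballI)
    fix z assume "z \<in> \<phi> ` {c..d}"
    then obtain y where y: "y \<in> {c..d}" "z = \<phi> y" by auto
    then obtain x where xD: "x \<in> D" "dist x y < \<delta> x" using D(3) by auto
    hence "\<phi> y \<le> M x" using dm[of x] D(1) y by (auto simp: dist_commute)
    also have "M x \<le> Max (insert 0 (M ` D))" using D(2) xD by auto
    finally show "z \<le> Max (insert 0 (M ` D))" using y by simp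
  qed
qed

lemma ft_ge: "0 \<le> S \<Longrightarrow> S \<le> first_time S P"
proof (cases "\<exists>t. S \<le> ereal t \<and> P t")
  case True
  assume S: "0 \<le> S"
  have "S \<le> ereal (Inf {t. S \<le> ereal t \<and> P t})"
  proof (cases S)
    case (real r)
    have "r \<le> Inf {t. S \<le> ereal t \<and> P t}"
      using True by (intro cInf_greatest) (auto simp: real)
    thus ?thesis using real by simp
  qed (use S True in auto)
  thus ?thesis using True by (simp add: first_time_def)
qed (auto simp add: first_time_def)

lemma ft_lower: "0 \<le> S \<Longrightarrow> S \<le> ereal u \<Longrightarrow> P u \<Longrightarrow> first_time S P \<le> ereal u"
proof -
  assume a: "0 \<le> S" "S \<le> ereal u" "P u"
  have "bdd_below {t. S \<le> ereal t \<and> P t}"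
    unfolding bdd_below_def using a(1) by (intro exI[of _ 0]) (auto, metis order_trans zero_ereal_def ereal_less_eq(3))
  hence "Inf {t. S \<le> ereal t \<and> P t} \<le> u" using a by (intro cInf_lower) auto
  thus ?thesis using a by (auto simp: first_time_def)
qed

lemma ft_not: "0 \<le> S \<Longrightarrow> S \<le> ereal u \<Longrightarrow> ereal u < first_time S P \<Longrightarrow> \<not> P u"
  using ft_lower by fastforce

lemma ft_real: "first_time S P = ereal r \<Longrightarrow> r = Inf {t. S \<le> ereal t \<and> P t} \<and> (\<exists>t. S \<le> ereal t \<and> P t)"
  by (auto simp: first_time_def split: if_splits)

lemma times_nonneg: "0 \<le> tau_time a \<phi> n \<and> tau_time a \<phi> n \<le> sigma_time a \<phi> n"
proof (induction n)
  case 0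
  show ?case by (simp add: tau_time_def sigma_time_def ft_ge)
next
  case (Suc n)
  hence "0 \<le> sigma_time a \<phi> n" by (meson order_trans)
  thus ?case by (simp add: tau_time_def sigma_time_def Let_def)
      (meson ft_ge order_trans)
qed

lemma sigma_nonneg: "0 \<le> sigma_time a \<phi> n"
  using times_nonneg by (meson order_trans)

theorem proposition3p2:
  fixes a :: real and \<phi> :: "real \<Rightarrow> real" and k :: nat and t :: real
  assumes "a > 0" and "\<phi> \<in> Dplus" and "k \<ge> 1"
    and "sigma_time a \<phi> (k - 1) \<le> ereal t" and "ereal t < tau_time a \<phi> k"
  shows "Cphi a \<phi> t = (SUP s\<in>{s. sigma_time a \<phi> (k - 1) \<le> ereal s \<and> s \<le> t}. max (\<phi> s - a) 0)"
proof -
  note phi = assms(2)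
  have nn: "\<And>x. 0 \<le> x \<Longrightarrow> 0 \<le> \<phi> x" using phi unfolding Dplus_def by auto
  obtain j where kj: "k = Suc j" using assms(3) by (cases k) auto
  define \<sigma> where "\<sigma> = sigma_time a \<phi> j"
  have s0: "0 \<le> \<sigma>" unfolding \<sigma>_def by (rule sigma_nonneg)
  have st: "\<sigma> \<le> ereal t" using assms(4) kj \<sigma>_def by simp
  obtain r where r: "\<sigma> = ereal r" using s0 st by (cases \<sigma>) auto
  have r0: "0 \<le> r" "r \<le> t" using s0 st r by auto
  have tauk: "tau_time a \<phi> k = first_time \<sigma> (\<lambda>u. \<phi> u \<le> (SUP s\<in>{s. \<sigma> \<le> ereal s \<and> s \<le> u}. \<phi> s) - a)"
    by (simp add: kj tau_time_def \<sigma>_def sigma_time_def Let_def)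
  define Iv where "Iv = (\<lambda>s x. INF u\<in>{s..x}. \<phi> u)"
  have Iv_lower: "Iv s x \<le> \<phi> u" if "0 \<le> s" "s \<le> u" "u \<le> x" for s x u
  proof -
    have "bdd_below (\<phi> ` {s..x})" unfolding bdd_below_def using nn that(1)
      by (intro exI[of _ 0]) auto
    thus ?thesis unfolding Iv_def using that by (intro cINF_lower) auto
  qed
  have Iv_greatest: "c \<le> Iv s x" if "s \<le> x" "\<And>u. s \<le> u \<Longrightarrow> u \<le> x \<Longrightarrow> c \<le> \<phi> u" for s x c
    unfolding Iv_def using that by (intro cINF_greatest) auto
  define g where "g = (\<lambda>s. max (\<phi> s - a) 0)"
  define f where "f = (\<lambda>s. min (g s) (Iv s t))"
  have step1: "\<phi> s - a < \<phi> u" if "r \<le> s" "s \<le> u" "u \<le> t" for s u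
  proof -
    have "ereal u < tau_time a \<phi> k" using assms(5) that(3)
      by (meson ereal_less_eq(3) order_le_less_trans)
    hence "\<not> (\<phi> u \<le> (SUP s\<in>{s. \<sigma> \<le> ereal s \<and> s \<le> u}. \<phi> s) - a)"
      using ft_not[OF s0, of u] tauk r that by auto
    moreover have "{s. \<sigma> \<le> ereal s \<and> s \<le> u} = {r..u}" using r by auto
    moreover have "\<phi> s \<le> (SUP s\<in>{r..u}. \<phi> s)"
      using cadlag_bdd[OF phi r0(1), of u] that by (intro cSUP_upper) auto
    ultimately show ?thesis by auto
  qed
  have step2: "f s = g s" if "r \<le> s" "s \<le> t" for s
  proof -
    have "g s \<le> Iv s t"
      using that step1 nn r0 unfolding g_def by (intro Iv_greatest) (auto intro!: nn less_imp_le)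
    thus ?thesis unfolding f_def by simp
  qed
  have setR: "{s. sigma_time a \<phi> (k - 1) \<le> ereal s \<and> s \<le> t} = {r..t}"
    using r kj \<sigma>_def by auto
  define R where "R = (SUP s\<in>{r..t}. g s)"
  obtain B where B: "\<And>x. x \<in> {r..t} \<Longrightarrow> \<phi> x \<le> B"
    using cadlag_bdd[OF phi r0(1), of t] unfolding bdd_above_def by (auto simp del: atLeastAtMost_iff)
  have bddg: "bdd_above (g ` {r..t})" unfolding bdd_above_def g_def
    by (rule exI[of _ "max (B - a) 0"]) (auto dest: B)
  have gR: "g s \<le> R" if "r \<le> s" "s \<le> t" for s
    unfolding R_def using bddg that by (intro cSUP_upper) auto
  have R0: "0 \<le> R" using gR[of r] r0 unfolding g_def by auto
  have step3: "f s \<le> R" if "0 \<le> s" "s < r" for s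
  proof (cases j)
    case 0
    have "\<sigma> = first_time 0 (\<lambda>t. \<phi> t - a \<ge> 0)"
      by (simp add: \<sigma>_def 0 sigma_time_def)
    moreover have "ereal s < \<sigma>" using that r by simp
    ultimately have "ereal s < first_time 0 (\<lambda>t. \<phi> t - a \<ge> 0)" by (rule subst)
    hence "\<not> (\<phi> s - a \<ge> 0)" using ft_not[of 0 s "\<lambda>t. \<phi> t - a \<ge> 0"] that by simp
    hence "g s = 0" unfolding g_def by auto
    thus ?thesis using R0 unfolding f_def by auto
  next
    case (Suc i)
    define \<tau> where "\<tau> = tau_time a \<phi> j"
    define Q where "Q = (\<lambda>u. \<phi> u - a \<ge> (INF u'\<in>{u'. \<tau> \<le> ereal u' \<and> u' \<le> u}. \<phi> u'))"
    have sq: "\<sigma> = first_time \<tau> Q"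
      by (simp add: \<sigma>_def \<tau>_def Q_def Suc sigma_time_def tau_time_def Let_def)
    have t0: "0 \<le> \<tau>" "\<tau> \<le> \<sigma>" using times_nonneg \<tau>_def \<sigma>_def by auto
    obtain p where p: "\<tau> = ereal p" using t0 r by (cases \<tau>) auto
    have p0: "0 \<le> p" "p \<le> r" using t0 p r by auto
    have Qeq: "Q u \<longleftrightarrow> \<phi> u - a \<ge> Iv p u" for u
    proof -
      have "{u'. \<tau> \<le> ereal u' \<and> u' \<le> u} = {p..u}" using p by auto
      thus ?thesis unfolding Q_def Iv_def by simp
    qed
    from ft_real[OF sq[symmetric, unfolded r]]
    have rinf: "r = Inf {u. \<tau> \<le> ereal u \<and> Q u}" and ex: "\<exists>u. \<tau> \<le> ereal u \<and> Q u" by auto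
    have notQ: "\<not> Q u" if "p \<le> u" "u < r" for u
    proof -
      have e1: "ereal u < ereal r" using that(2) by simp
      have e2: "first_time \<tau> Q = ereal r" using sq r by simp
      have "\<tau> \<le> ereal u" "ereal u < first_time \<tau> Q"
        using p that apply simp
        using e1 e2 by simp
      thus ?thesis using ft_not[OF t0(1), of u Q] by blast
    qed
    have Qr: "Q r"
    proof (rule ccontr)
      assume nQ: "\<not> Q r"
      hence lt: "\<phi> r - a < Iv p r" using Qeq by auto
      define d where "d = Iv p r - (\<phi> r - a)"
      define e where "e = min d a / 2"
      have e0: "0 < e" using lt assms(1) unfolding e_def d_def by auto
      obtain b where b: "b > r" "\<forall>y>r. y < b \<longrightarrow> \<bar>\<phi> y - \<phi> r\<bar> < e"
        using rc[OF phi r0(1) e0] by auto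
      have big: "b \<le> u" if "p \<le> u" "Q u" for u
      proof (rule ccontr)
        assume "\<not> b \<le> u"
        hence ub: "u < b" by simp
        have "r < u"
        proof (rule ccontr)
          assume "\<not> r < u"
          hence "u < r \<or> u = r" by auto
          thus False using notQ[of u] that nQ by auto
        qed
        define c where "c = min (Iv p r) (\<phi> r - e)"
        have "c \<le> Iv p u"
        proof (rule Iv_greatest)
          show "p \<le> u" by fact
          fix v assume v: "p \<le> v" "v \<le> u"
          show "c \<le> \<phi> v"
          proof (cases "v \<le> r")
            case True
            thus ?thesis using Iv_lower[of p v r] v p0 unfolding c_def by auto
          next
            case False
            thus ?thesis using b(2)[rule_format, of v] v ub unfolding c_def by auto
          qed
        qed
        moreover have "\<phi> u - a < c"
        proof -
          have A0: "\<bar>\<phi> u - \<phi> r\<bar> < e" using b(2) \<open>r < u\<close> ub by auto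
          hence A: "\<phi> u < \<phi> r + e" by (simp add: abs_less_iff)
          have B: "e \<le> d / 2" "e \<le> a / 2" unfolding e_def by auto
          have "\<phi> u - a < Iv p r" using A B lt unfolding d_def by argo
          moreover have "\<phi> u - a < \<phi> r - e" using A B by argo
          ultimately show ?thesis unfolding c_def by simp
        qed
        ultimately show False using that(2) Qeq by auto
      qed
      have "b \<le> r" unfolding rinf using ex p big by (intro cInf_greatest) auto
      thus False using b by simp
    qed
    hence IQ: "Iv p r \<le> \<phi> r - a" using Qeq by auto
    have gr: "\<phi> r - a \<le> R" using gR[of r] r0 unfolding g_def by auto
    show ?thesis
    proof (cases "s < p")
      case True
      have "Iv s t \<le> Iv p r"
        using Iv_lower[of s _ t] that True p0 r0 by (intro Iv_greatest) auto
      thus ?thesis using IQ gr unfolding f_def by auto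
    next
      case False
      show ?thesis
      proof (cases "g s = 0")
        case True thus ?thesis using R0 unfolding f_def by auto
      next
        case gs: False
        hence gs': "g s = \<phi> s - a" unfolding g_def by auto
        have nq: "\<phi> s - a < Iv p s" using notQ[of s] False that Qeq by auto
        have "f s \<le> Iv p r"
        proof (rule Iv_greatest)
          show "p \<le> r" by fact
          fix u assume u: "p \<le> u" "u \<le> r"
          show "f s \<le> \<phi> u"
          proof (cases "u \<le> s")
            case True
            thus ?thesis using Iv_lower[of p u s] u p0 nq gs' unfolding f_def by auto
          next
            case False
            thus ?thesis using Iv_lower[of s u t] u that r0 unfolding f_def by auto
          qed
        qed
        thus ?thesis using IQ gr by auto
      qed
    qed
  qed
  have C: "Cphi a \<phi> t = (SUP s\<in>{0..t}. f s)"
    by (simp add: Cphi_def f_def g_def Iv_def)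
  have bddf: "bdd_above (f ` {0..t})" unfolding bdd_above_def
    using Iv_lower[of _ t t] r0 unfolding f_def
    by (intro exI[of _ "\<phi> t"]) (auto intro: min.coboundedI2)
  have le: "(SUP s\<in>{0..t}. f s) \<le> R"
    using r0 step2 step3 gR by (intro cSUP_least) (auto, force)
  have ge: "R \<le> (SUP s\<in>{0..t}. f s)"
    unfolding R_def using r0
  proof (intro cSUP_least)
    fix s assume "s \<in> {r..t}"
    thus "g s \<le> (SUP s\<in>{0..t}. f s)"
      using step2[of s] bddf r0 by (auto intro!: cSUP_upper2[of _ _ s])
  qed auto
  show ?thesis unfolding setR C using le ge unfolding R_def g_def by simp
qed

end
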